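(* For all integers $n, k \geq 1$ with $n \geq k$, $$\sum_{i=k}^{n} \frac{S(n,i)\, s(i,k)}{i} = \frac{1}{n}\binom{n}{k} B_{n-k} + \delta_{n-1,k},$$ where $\delta$ denotes the Kronecker delta.
   Context: For $n \geq 0$, $X^{\underline{n}} := X(X-1)\cdots(X-n+1)$ ($X^{\underline{0}}=1$). The (signed) Stirling numbers of the first kind $s(n,k)$ are defined by $X^{\underline{n}} = \sum_{k=0}^{n} s(n,k) X^k$, and the Stirling numbers of the second kind $S(n,k)$ by $X^n = \sum_{k=0}^{n} S(n,k) X^{\underline{k}}$ (for all $n\ge 0$), with $s(n,k)=S(n,k)=0$ when $n<k$. The Bernoulli numbers $B_n$ are defined by $\frac{t}{e^t-1} = \sum_{n\ge 0} B_n \frac{t^n}{n!}$. *)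

theory Defs
  imports "HOL-Combinatorics.Stirling" "HOL-Computational_Algebra.Formal_Power_Series"
begin

text \<open>Signed Stirling numbers of the first kind: s(n,k) = (-1)^(n-k) * c(n,k),
  where c = stirling is the unsigned (cycle) Stirling number of the library.
  Stirling numbers of the second kind are the library's Stirling.\<close>
definition stirling1s :: "nat \<Rightarrow> nat \<Rightarrow> int" where
  "stirling1s n k = (-1) ^ (n - k) * int (stirling n k)"

definition bernoulli_gf :: "real fps" where
  "bernoulli_gf = fps_X / (fps_exp 1 - 1)"

definition bernoulli :: "nat \<Rightarrow> real" where
  "bernoulli n = fact n * fps_nth bernoulli_gf n"

end

theory Submission
  imports Defs "HOL-Computational_Algebra.Polynomial"
begin


definition ff :: "nat \<Rightarrow> real \<Rightarrow> real" where
  "ff i x = (-1)^i * pochhammer (-x) i"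

lemma ff_0 [simp]: "ff 0 x = 1" by (simp add: ff_def)

lemma ff_Suc: "ff (Suc i) x = ff i x * (x - of_nat i)"
  by (simp add: ff_def pochhammer_Suc algebra_simps)

lemma ff_Suc': "ff (Suc i) (x + 1) = (x + 1) * ff i x"
  by (simp add: ff_def pochhammer_rec algebra_simps)

lemma ff_at0: "i > 0 \<Longrightarrow> ff i 0 = 0"
  by (cases i) (simp_all add: ff_def pochhammer_rec)

lemma ff_diff: "ff (Suc i) (x + 1) - ff (Suc i) x = of_nat (Suc i) * ff i x"
  by (subst ff_Suc', subst ff_Suc) (simp add: algebra_simps)

lemma Stirling_ff: "x ^ n = (\<Sum>i\<le>n. real (Stirling n i) * ff i x)"
proof (induction n)
  case 0
  then show ?case by simp
next
  case (Suc n)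
  have "x ^ Suc n = (\<Sum>i\<le>n. real (Stirling n i) * (x * ff i x))"
    by (simp add: Suc sum_distrib_left algebra_simps)
  also have "\<dots> = (\<Sum>i\<le>n. real (Stirling n i) * ff (Suc i) x)
       + (\<Sum>i\<le>n. real i * real (Stirling n i) * ff i x)"
    unfolding sum.distrib[symmetric] by (intro sum.cong) (auto simp: ff_Suc algebra_simps)
  also have "(\<Sum>i\<le>n. real i * real (Stirling n i) * ff i x)
     = (\<Sum>i\<le>n. real (Suc i) * real (Stirling n (Suc i)) * ff (Suc i) x)"
  proof -
    have "(\<Sum>i\<le>Suc n. real i * real (Stirling n i) * ff i x)
       = (\<Sum>i\<le>n. real (Suc i) * real (Stirling n (Suc i)) * ff (Suc i) x)"
      by (subst sum.atMost_Suc_shift) simp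
    then show ?thesis by simp
  qed
  also have "(\<Sum>i\<le>n. real (Stirling n i) * ff (Suc i) x) + \<dots>
     = (\<Sum>i\<le>Suc n. real (Stirling (Suc n) i) * ff i x)"
    by (subst sum.atMost_Suc_shift) (simp add: sum.distrib algebra_simps)
  finally show ?case .
qed

lemma bern_gf: "bernoulli_gf * (fps_exp 1 - 1) = fps_X"
proof -
  have ne: "fps_exp (1::real) - 1 \<noteq> 0" by simp
  have sd: "subdegree (fps_exp (1::real) - 1) = 1"
    by (rule subdegreeI) auto
  have "(fps_exp (1::real) - 1) dvd fps_X"
    using ne sd by (subst fps_dvd_iff) auto
  then show ?thesis unfolding bernoulli_gf_def by simp
qed



abbreviation bb :: "nat \<Rightarrow> real" where "bb i \<equiv> fps_nth bernoulli_gf i"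

lemma geom_exp: "(fps_exp 1 - 1) * (\<Sum>j<N. fps_exp (real j)) = fps_exp (real N) - (1::real fps)"
proof (induction N)
  case 0 then show ?case by simp
next
  case (Suc N)
  have "fps_exp (real (Suc N)) = fps_exp 1 * fps_exp (real N)"
    by (simp add: fps_exp_add_mult[symmetric] add.commute)
  then show ?case using Suc by (simp add: algebra_simps)
qed

lemma faulhaber:
  "(\<Sum>j<N. real j ^ m) = fact m * (\<Sum>i<Suc m. bb i * real N ^ (Suc m - i) / fact (Suc m - i))"
proof -
  have "fps_X * (\<Sum>j<N. fps_exp (real j)) = bernoulli_gf * (fps_exp (real N) - 1)"
    using bern_gf geom_exp by (metis mult.assoc)
  hence H: "fps_nth (fps_X * (\<Sum>j<N. fps_exp (real j))) (Suc m) = fps_nth (bernoulli_gf * (fps_exp (real N) - 1)) (Suc m)"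
    by simp
  hence e: "(\<Sum>j<N. real j ^ m / fact m) = (\<Sum>i=0..Suc m. bb i * (real N ^ (Suc m - i) / fact (Suc m - i) - (if Suc m - i = 0 then 1 else 0)))"
  proof -
    have L: "fps_nth (fps_X * (\<Sum>j<N. fps_exp (real j))) (Suc m) = (\<Sum>j<N. real j ^ m / fact m)"
      by (simp add: fps_sum_nth)
    have R: "fps_nth (bernoulli_gf * (fps_exp (real N) - 1)) (Suc m) = (\<Sum>i=0..Suc m. bb i * (real N ^ (Suc m - i) / fact (Suc m - i) - (if Suc m - i = 0 then 1 else 0)))"
      unfolding fps_mult_nth by (intro sum.cong) auto
    show ?thesis using L R H by simp
  qed
  have "(\<Sum>i=0..Suc m. bb i * (real N ^ (Suc m - i) / fact (Suc m - i) - (if Suc m - i = 0 then 1 else 0)))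
      = (\<Sum>i<Suc m. bb i * real N ^ (Suc m - i) / fact (Suc m - i))"
    by (simp add: atLeast0AtMost atMost_Suc lessThan_Suc_atMost[symmetric] algebra_simps)
  with e have "(\<Sum>j<N. real j ^ m) / fact m = (\<Sum>i<Suc m. bb i * real N ^ (Suc m - i) / fact (Suc m - i))"
    by (simp add: sum_divide_distrib)
  then show ?thesis by (simp add: field_simps)
qed



definition Pf :: "nat \<Rightarrow> real \<Rightarrow> real" where
  "Pf m x = (\<Sum>j\<le>m. real (Stirling (Suc m) (Suc j)) / real (Suc j) * ff (Suc j) x)"

lemma Pf_step:
  assumes "x + 1 \<noteq> 0"
  shows "Pf m (x + 1) - Pf m x = (x + 1) ^ m"
proof -
  have D: "Pf m (x + 1) - Pf m x = (\<Sum>j\<le>m. real (Stirling (Suc m) (Suc j)) * ff j x)"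
    unfolding Pf_def sum_subtractf[symmetric]
  proof (intro sum.cong refl)
    fix j
    have e: "ff (Suc j) (x + 1) - ff (Suc j) x = real (Suc j) * ff j x" by (rule ff_diff)
    have "real (Stirling (Suc m) (Suc j)) / real (Suc j) * ff (Suc j) (x + 1) -
          real (Stirling (Suc m) (Suc j)) / real (Suc j) * ff (Suc j) x
        = real (Stirling (Suc m) (Suc j)) / real (Suc j) * (real (Suc j) * ff j x)"
      by (simp only: right_diff_distrib[symmetric] e)
    also have "\<dots> = real (Stirling (Suc m) (Suc j)) * ff j x"
      by (simp del: of_nat_Suc)
    finally show "real (Stirling (Suc m) (Suc j)) / real (Suc j) * ff (Suc j) (x + 1) -
          real (Stirling (Suc m) (Suc j)) / real (Suc j) * ff (Suc j) x = real (Stirling (Suc m) (Suc j)) * ff j x" .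
  qed
  have "(x + 1) ^ Suc m = (\<Sum>i\<le>Suc m. real (Stirling (Suc m) i) * ff i (x + 1))"
    by (rule Stirling_ff)
  also have "\<dots> = (\<Sum>j\<le>m. real (Stirling (Suc m) (Suc j)) * ff (Suc j) (x + 1))"
    by (subst sum.atMost_Suc_shift) simp
  also have "\<dots> = (x + 1) * (\<Sum>j\<le>m. real (Stirling (Suc m) (Suc j)) * ff j x)"
    unfolding sum_distrib_left by (intro sum.cong refl) (simp only: ff_Suc' mult.left_commute)
  finally have "(x + 1) * (x + 1) ^ m = (x + 1) * (\<Sum>j\<le>m. real (Stirling (Suc m) (Suc j)) * ff j x)"
    by simp
  with assms D show ?thesis by simp
qed

lemma Pf_nat: "Pf m (real N) = (\<Sum>j<N. real j ^ m) + real N ^ m - 0 ^ m"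
proof (induction N)
  case 0
  then show ?case by (simp add: Pf_def ff_at0)
next
  case (Suc N)
  have "Pf m (real (Suc N)) = Pf m (real N) + (real N + 1) ^ m"
    using Pf_step[of "real N" m] by (simp add: add.commute)
  then show ?case using Suc by (simp add: add.commute)
qed

definition ffp :: "nat \<Rightarrow> real poly" where
  "ffp i = (\<Sum>k\<le>i. monom (real_of_int (stirling1s i k)) k)"

lemma poly_ffp: "poly (ffp i) x = ff i x"
proof -
  have "ff i x = (-1)^i * (\<Sum>k\<le>i. real (stirling i k) * (-x) ^ k)"
    by (simp add: ff_def stirling_pochhammer)
  also have "\<dots> = (\<Sum>k\<le>i. real_of_int (stirling1s i k) * x ^ k)"
    unfolding sum_distrib_left
  proof (intro sum.cong refl)
    fix k assume "k \<in> {..i}"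
    hence "i = (i - k) + k" by simp
    hence "(-1::real)^i = (-1)^(i-k) * (-1)^k" by (metis power_add)
    then show "(-1) ^ i * (real (stirling i k) * (- x) ^ k) = real_of_int (stirling1s i k) * x ^ k"
      by (simp add: stirling1s_def power_minus[of x] )
  qed
  finally show ?thesis by (simp add: ffp_def poly_sum poly_monom)
qed

lemma coeff_ffp: "coeff (ffp i) k = real_of_int (stirling1s i k)"
  by (cases "k \<le> i") (auto simp: ffp_def coeff_sum coeff_monom stirling1s_def)



definition Pp :: "nat \<Rightarrow> real poly" where
  "Pp m = (\<Sum>j\<le>m. smult (real (Stirling (Suc m) (Suc j)) / real (Suc j)) (ffp (Suc j)))"

definition Qp :: "nat \<Rightarrow> real poly" where
  "Qp m = (\<Sum>i<Suc m. smult (fact m * bb i / fact (Suc m - i)) (monom 1 (Suc m - i)))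
          + monom 1 m - [:0 ^ m:]"

lemma Pp_eq_Qp: "Pp m = Qp m"
proof -
  have ev: "poly (Pp m - Qp m) (real N) = 0" for N
  proof -
    have "poly (Pp m) (real N) = Pf m (real N)"
      by (simp add: Pp_def Pf_def poly_sum poly_ffp)
    also have "\<dots> = (\<Sum>j<N. real j ^ m) + real N ^ m - 0 ^ m" by (rule Pf_nat)
    also have "\<dots> = poly (Qp m) (real N)"
      by (simp add: Qp_def poly_sum poly_monom faulhaber sum_distrib_left distrib_left del: sum.lessThan_Suc) (simp add: algebra_simps)
    finally show ?thesis by simp
  qed
  show ?thesis
  proof (rule ccontr)
    assume "Pp m \<noteq> Qp m"
    hence "finite {x. poly (Pp m - Qp m) x = 0}" by (intro poly_roots_finite) simp
    moreover have "range real \<subseteq> {x. poly (Pp m - Qp m) x = 0}" using ev by auto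
    ultimately have "finite (range (real :: nat \<Rightarrow> real))" by (rule finite_subset[rotated])
    moreover have "infinite (range (real :: nat \<Rightarrow> real))"
      by (intro range_inj_infinite) (simp add: inj_on_def)
    ultimately show False by simp
  qed
qed



lemma coeff_Pp:
  assumes "1 \<le> k" "k \<le> Suc m"
  shows "coeff (Pp m) k = (\<Sum>i=k..Suc m. real (Stirling (Suc m) i) * real_of_int (stirling1s i k) / real i)"
proof -
  let ?g = "\<lambda>i. real (Stirling (Suc m) i) * real_of_int (stirling1s i k) / real i"
  have "coeff (Pp m) k = (\<Sum>j\<le>m. ?g (Suc j))"
    by (simp add: Pp_def coeff_sum coeff_ffp del: of_nat_Suc)
  also have "\<dots> = (\<Sum>j=0..m. ?g (Suc j))" by (simp add: atMost_atLeast0)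
  also have "\<dots> = (\<Sum>i=Suc 0..Suc m. ?g i)" by (rule sum.shift_bounds_cl_Suc_ivl[symmetric])
  also have "\<dots> = (\<Sum>i=k..Suc m. ?g i)"
    using assms by (intro sum.mono_neutral_right) (auto simp: stirling1s_def)
  finally show ?thesis .
qed

lemma coeff_Qp:
  assumes "1 \<le> k" "k \<le> Suc m"
  shows "coeff (Qp m) k = fact m * bb (Suc m - k) / fact k + (if m = k then 1 else 0)"
proof -
  have "(\<Sum>i<Suc m. fact m * bb i / fact (Suc m - i) * (if Suc m - i = k then 1 else 0))
      = (\<Sum>i<Suc m. if i = Suc m - k then fact m * bb i / fact (Suc m - i) else 0)"
    using assms by (intro sum.cong refl) auto
  also have "\<dots> = fact m * bb (Suc m - k) / fact k"
    using assms by (subst sum.delta) auto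
  finally have s: "(\<Sum>i<Suc m. fact m * bb i / fact (Suc m - i) * (if Suc m - i = k then 1 else 0))
      = fact m * bb (Suc m - k) / fact k" .
  have c0: "coeff [:0 ^ m:] k = (0::real)" using assms by (cases k) auto
  show ?thesis
    by (simp only: Qp_def coeff_add coeff_diff coeff_sum coeff_smult coeff_monom s c0)
qed

theorem corollary4:
  fixes n k :: nat
  assumes "k \<ge> 1" and "n \<ge> k"
  shows "(\<Sum>i=k..n. real (Stirling n i) * real_of_int (stirling1s i k) / real i)
         = (1 / real n) * real (n choose k) * bernoulli (n - k)
           + (if n - 1 = k then 1 else 0)"
proof -
  obtain m where n: "n = Suc m" using assms by (cases n) auto
  have k: "1 \<le> k" "k \<le> Suc m" using assms n by auto
  have "(\<Sum>i=k..n. real (Stirling n i) * real_of_int (stirling1s i k) / real i)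
      = coeff (Pp m) k" using coeff_Pp[OF k] n by simp
  also have "\<dots> = coeff (Qp m) k" by (simp add: Pp_eq_Qp)
  also have "\<dots> = fact m * bb (Suc m - k) / fact k + (if m = k then 1 else 0)"
    by (rule coeff_Qp[OF k])
  also have "fact m * bb (Suc m - k) / fact k = (1 / real n) * real (n choose k) * bernoulli (n - k)"
  proof -
    have C: "real (n choose k) = real n * fact m / (fact k * fact (n - k))"
      using assms n by (simp add: binomial_fact)
    have d: "Suc m - k = n - k" using n by simp
    have np: "real n > 0" using n by simp
    show ?thesis unfolding C d bernoulli_def using np by (simp add: field_simps)
  qed
  finally show ?thesis using n by simp
qed


end
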